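(* Let $X$ be a Hausdorff hereditarily disconnected space. If $\mathcal{C}\subset\mathcal{K}(X)$ is connected and there exists $T\in\mathcal{C}$ that is scattered, then $|\mathcal{C}|=1$.
   Context: $\mathcal{K}(X)$ is the set of nonempty compact subsets of $X$ with the Vietoris topology (generated by $U^+=\{A: A\subset U\}$ and $U^-=\{A: A\cap U\neq\emptyset\}$ for $U$ open in $X$). A space is hereditarily disconnected if every nonempty connected subset is a singleton. A space is scattered if every nonempty subset has an isolated point (in its relative topology). *)

theory Defs
  imports "HOL-Analysis.Analysis"
begin

definition hyperspace_K :: "'a topology \<Rightarrow> 'a set set" where
  "hyperspace_K X = {A. A \<noteq> {} \<and> compactin X A}"

definition vietoris_upper :: "'a topology \<Rightarrow> 'a set \<Rightarrow> 'a set set" where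
  "vietoris_upper X U = {A \<in> hyperspace_K X. A \<subseteq> U}"

definition vietoris_lower :: "'a topology \<Rightarrow> 'a set \<Rightarrow> 'a set set" where
  "vietoris_lower X U = {A \<in> hyperspace_K X. A \<inter> U \<noteq> {}}"

definition vietoris :: "'a topology \<Rightarrow> 'a set topology" where
  "vietoris X = topology_generated_by
     ({vietoris_upper X U | U. openin X U} \<union> {vietoris_lower X U | U. openin X U})"

definition hereditarily_disconnected :: "'a topology \<Rightarrow> bool" where
  "hereditarily_disconnected X \<longleftrightarrow>
     (\<forall>S. S \<subseteq> topspace X \<and> S \<noteq> {} \<and> connectedin X S \<longrightarrow> (\<exists>x. S = {x}))"

definition scattered_in :: "'a topology \<Rightarrow> 'a set \<Rightarrow> bool" where
  "scattered_in X T \<longleftrightarrow> T \<subseteq> topspace X \<and>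
     (\<forall>S. S \<subseteq> T \<and> S \<noteq> {} \<longrightarrow> (\<exists>x\<in>S. openin (subtopology X S) {x}))"

end

theory Submission
  imports Defs
begin

lemma topspace_vietoris: "topspace (vietoris X) = hyperspace_K X"
proof -
  have "vietoris_upper X (topspace X) = hyperspace_K X"
    by (auto simp: vietoris_upper_def hyperspace_K_def dest: compactin_subset_topspace)
  then show ?thesis
    unfolding vietoris_def topology_generated_by_topspace
    by (auto simp: vietoris_upper_def vietoris_lower_def)
qed

lemma open_upper: "openin X U \<Longrightarrow> openin (vietoris X) (vietoris_upper X U)"
  unfolding vietoris_def by (rule topology_generated_by_Basis) blast

lemma open_lower: "openin X U \<Longrightarrow> openin (vietoris X) (vietoris_lower X U)"
  unfolding vietoris_def by (rule topology_generated_by_Basis) blast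

lemma conn_image:
  assumes C: "connectedin (vietoris X) \<C>" "\<C> \<subseteq> hyperspace_K X"
    and f: "\<And>A. A \<in> \<C> \<Longrightarrow> f A \<in> hyperspace_K X"
    and up: "\<And>U. openin X U \<Longrightarrow> openin (subtopology (vietoris X) \<C>) {A\<in>\<C>. f A \<subseteq> U}"
    and lo: "\<And>U. openin X U \<Longrightarrow> openin (subtopology (vietoris X) \<C>) {A\<in>\<C>. f A \<inter> U \<noteq> {}}"
  shows "connectedin (vietoris X) (f ` \<C>)"
proof -
  have ts: "topspace (subtopology (vietoris X) \<C>) = \<C>"
    using C(2) by (simp add: topspace_vietoris inf_absorb2)
  have "continuous_map (subtopology (vietoris X) \<C>) (topology_generated_by
     ({vietoris_upper X U | U. openin X U} \<union> {vietoris_lower X U | U. openin X U})) f"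
  proof (rule continuous_on_generated_topo)
    fix V assume "V \<in> {vietoris_upper X U |U. openin X U} \<union> {vietoris_lower X U |U. openin X U}"
    then obtain U where U: "openin X U" "V = vietoris_upper X U \<or> V = vietoris_lower X U" by blast
    then show "openin (subtopology (vietoris X) \<C>) (f -` V \<inter> topspace (subtopology (vietoris X) \<C>))"
    proof (elim disjE)
      assume V: "V = vietoris_upper X U"
      have "f -` V \<inter> \<C> = {A\<in>\<C>. f A \<subseteq> U}" using f V by (auto simp: vietoris_upper_def)
      then show ?thesis using up[OF U(1)] ts by simp
    next
      assume V: "V = vietoris_lower X U"
      have "f -` V \<inter> \<C> = {A\<in>\<C>. f A \<inter> U \<noteq> {}}" using f V by (auto simp: vietoris_lower_def)
      then show ?thesis using lo[OF U(1)] ts by simp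
    qed
  next
    show "f ` topspace (subtopology (vietoris X) \<C>) \<subseteq> \<Union> ({vietoris_upper X U |U. openin X U} \<union> {vietoris_lower X U |U. openin X U})"
    proof
      fix B assume "B \<in> f ` topspace (subtopology (vietoris X) \<C>)"
      then have "B \<in> vietoris_upper X (topspace X)"
        using f ts by (auto simp: vietoris_upper_def hyperspace_K_def dest: compactin_subset_topspace)
      then show "B \<in> \<Union> ({vietoris_upper X U |U. openin X U} \<union> {vietoris_lower X U |U. openin X U})"
        by blast
    qed
  qed
  then have "continuous_map (subtopology (vietoris X) \<C>) (vietoris X) f"
    unfolding vietoris_def[symmetric] .
  moreover have "connectedin (subtopology (vietoris X) \<C>) \<C>"
    using C by (simp add: connectedin_subtopology)
  ultimately show ?thesis by (rule connectedin_continuous_map_image)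
qed

lemma conn_split:
  assumes "connectedin V \<C>" "openin (subtopology V \<C>) U1" "openin (subtopology V \<C>) U2"
    "U1 \<inter> U2 = {}" "\<C> \<subseteq> U1 \<union> U2"
  shows "U1 = {} \<or> U2 = {}"
proof -
  have "connected_space (subtopology V \<C>)" and sub: "\<C> \<subseteq> topspace V"
    using assms(1) by (auto simp: connectedin_def)
  then show ?thesis using assms unfolding connected_space_def
    by (auto simp: inf_absorb2)
qed


locale hdX =
  fixes X :: "'a topology"
  assumes haus: "Hausdorff_space X" and hd: "hereditarily_disconnected X"
begin

definition OK :: "'a set \<Rightarrow> bool" where
  "OK K \<longleftrightarrow> (\<forall>\<C>. \<C> \<subseteq> hyperspace_K X \<and> connectedin (vietoris X) \<C> \<and> K \<in> \<C> \<and> (\<forall>A\<in>\<C>. K \<subseteq> A) \<longrightarrow> \<C> = {K})"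

lemma lemmaL:
  assumes F: "finite F"
    and IH: "\<And>K'. compactin X K' \<Longrightarrow> K' \<subseteq> K \<Longrightarrow> K' \<inter> F = {} \<Longrightarrow> K' \<noteq> {} \<Longrightarrow> OK K'"
  shows "OK K"
  unfolding OK_def
proof (intro allI impI, elim conjE)
  fix \<C> assume Ch: "\<C> \<subseteq> hyperspace_K X" and conn: "connectedin (vietoris X) \<C>"
    and KC: "K \<in> \<C>" and Ksub: "\<forall>A\<in>\<C>. K \<subseteq> A"
  define S where "S = \<Union>\<C>"
  have cA: "compactin X A" "A \<noteq> {}" if "A \<in> \<C>" for A
    using Ch that by (auto simp: hyperspace_K_def)
  have AS: "A \<subseteq> S" if "A \<in> \<C>" for A using that S_def by blast
  have Stop: "S \<subseteq> topspace X" using cA compactin_subset_topspace S_def by blast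
  have Kc: "compactin X K" using cA KC by blast
  have Kcl: "closedin X K" using compactin_imp_closedin[OF haus Kc] .
  have KS: "K \<subseteq> S" using AS KC by blast
  have tsS: "topspace (subtopology X S) = S" using Stop by auto
  have tsC: "topspace (subtopology (vietoris X) \<C>) = \<C>"
    using Ch by (simp add: topspace_vietoris inf_absorb2)
  define G where "G = \<Union>{C. openin (subtopology X S) C \<and> (\<forall>A\<in>\<C>. A \<inter> C = K \<inter> C)}"
  have Gopen: "openin (subtopology X S) G" unfolding G_def by auto
  have AG: "A \<inter> G = K \<inter> G" if "A \<in> \<C>" for A
    using that unfolding G_def by blast
  have GS: "G \<subseteq> S" using openin_subset[OF Gopen] tsS by simp
  have GK: "G \<subseteq> K"
  proof
    fix x assume x: "x \<in> G"
    then obtain A where "A \<in> \<C>" "x \<in> A" using GS S_def by blast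
    then show "x \<in> K" using AG x by blast
  qed
  define R where "R = S - G"
  have Rcl: "closedin (subtopology X S) R"
    unfolding R_def using closedin_diff[OF closedin_topspace Gopen] tsS by simp
  have RS: "R \<subseteq> S" unfolding R_def by blast
  show "\<C> = {K}"
  proof (cases "R = {}")
    case True
    have "A = K" if "A \<in> \<C>" for A
      using AG[OF that] AS[OF that] KS True unfolding R_def by blast
    then show ?thesis using KC by blast
  next
    case False
    define clopR where "clopR D \<longleftrightarrow> openin (subtopology X R) D \<and> closedin (subtopology X R) D" for D
    have subR: "subtopology (subtopology X S) R = subtopology X R"
      using RS by (simp add: subtopology_subtopology inf_absorb2)
    have Dcl: "\<exists>Z. closedin X Z \<and> D = S \<inter> Z" if "clopR D" for D
    proof -
      have "closedin (subtopology X S) D"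
        using closedin_trans_full[of "subtopology X S" R D] that Rcl subR unfolding clopR_def by simp
      then show ?thesis by (auto simp: closedin_subtopology)
    qed
    have Dop: "\<exists>Q. openin X Q \<and> D = R \<inter> Q" if "clopR D" for D
      using that unfolding clopR_def by (auto simp: openin_subtopology)
    have DR: "D \<subseteq> R" if "clopR D" for D
      using that closedin_subset unfolding clopR_def by fastforce
    have upper: "openin (subtopology (vietoris X) \<C>) {A\<in>\<C>. A \<inter> D \<subseteq> U}"
      if D: "clopR D" and U: "openin X U" for D U
    proof -
      obtain Z where Z: "closedin X Z" "D = S \<inter> Z" using Dcl[OF D] by blast
      define O2 where "O2 = U \<union> (topspace X - Z)"
      have O2: "openin X O2" unfolding O2_def using U Z by auto
      have "{A\<in>\<C>. A \<inter> D \<subseteq> U} = vietoris_upper X O2 \<inter> \<C>"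
        using Ch AS Stop Z(2) unfolding vietoris_upper_def O2_def by blast
      then show ?thesis using open_upper[OF O2] by (auto simp: openin_subtopology)
    qed
    have lower: "openin (subtopology (vietoris X) \<C>) {A\<in>\<C>. A \<inter> D \<inter> U \<noteq> {}}"
      if D: "clopR D" and U: "openin X U" for D U
    proof (subst openin_subopen, intro ballI)
      fix A assume A: "A \<in> {A\<in>\<C>. A \<inter> D \<inter> U \<noteq> {}}"
      then obtain z where z: "z \<in> A" "z \<in> D" "z \<in> U" by blast
      show "\<exists>T. openin (subtopology (vietoris X) \<C>) T \<and> A \<in> T \<and> T \<subseteq> {A\<in>\<C>. A \<inter> D \<inter> U \<noteq> {}}"
      proof (cases "z \<in> K")
        case True
        show ?thesis
          using A True z Ksub tsC openin_topspace[of "subtopology (vietoris X) \<C>"]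
          by (intro exI[of _ \<C>]) auto
      next
        case False
        obtain Q where Q: "openin X Q" "D = R \<inter> Q" using Dop[OF D] by blast
        define Q' where "Q' = (U \<inter> Q) - K"
        have Q': "openin X Q'" unfolding Q'_def using U Q Kcl by auto
        define T where "T = vietoris_lower X Q' \<inter> \<C>"
        have "openin (subtopology (vietoris X) \<C>) T"
          unfolding T_def using open_lower[OF Q'] by (auto simp: openin_subtopology)
        moreover have "A \<in> T"
          using A z False Q Ch unfolding T_def Q'_def vietoris_lower_def by blast
        moreover have "T \<subseteq> {A\<in>\<C>. A \<inter> D \<inter> U \<noteq> {}}"
        proof
          fix A' assume "A' \<in> T"
          then obtain w where w: "A' \<in> \<C>" "w \<in> A'" "w \<in> Q'" unfolding T_def vietoris_lower_def by blast
          then have "w \<in> R" using AS GK unfolding R_def Q'_def by blast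
          then show "A' \<in> {A\<in>\<C>. A \<inter> D \<inter> U \<noteq> {}}" using w Q unfolding Q'_def by blast
        qed
        ultimately show ?thesis by blast
      qed
    qed
    have a: "D \<inter> K \<noteq> {}" if D: "clopR D" "D \<noteq> {}" for D
    proof
      assume DK: "D \<inter> K = {}"
      have "{A\<in>\<C>. A \<inter> D \<subseteq> {}} = {} \<or> {A\<in>\<C>. A \<inter> D \<inter> topspace X \<noteq> {}} = {}"
        by (rule conn_split[OF conn upper[OF D(1)] lower[OF D(1)]]) (use AS Stop in auto)
      moreover have "K \<in> {A\<in>\<C>. A \<inter> D \<subseteq> {}}" using KC DK by blast
      moreover have "{A\<in>\<C>. A \<inter> D \<inter> topspace X \<noteq> {}} \<noteq> {}"
      proof -
        obtain y where "y \<in> D" using D by blast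
        then obtain A where "A \<in> \<C>" "y \<in> A" using DR[OF D(1)] RS S_def by blast
        then show ?thesis using \<open>y \<in> D\<close> Stop AS by blast
      qed
      ultimately show False by blast
    qed
    have b: False if D: "clopR D" "D \<noteq> {}" and eq: "\<forall>A\<in>\<C>. A \<inter> D = K \<inter> D" for D
    proof -
      obtain Q where Q: "openin X Q" "D = R \<inter> Q" using Dop[OF D(1)] by blast
      have CeQ: "(S \<inter> Q) \<union> G = D \<union> G" using Q(2) unfolding R_def by blast
      have "openin (subtopology X S) ((S \<inter> Q) \<union> G)"
        using Q(1) Gopen by (auto simp: openin_subtopology)
      then have op: "openin (subtopology X S) (D \<union> G)" using CeQ by simp
      have "\<forall>A\<in>\<C>. A \<inter> (D \<union> G) = K \<inter> (D \<union> G)" using eq AG by blast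
      then have "D \<union> G \<subseteq> G" using op unfolding G_def by blast
      then show False using D DR[OF D(1)] unfolding R_def by blast
    qed
    have c: "\<forall>A\<in>\<C>. A \<inter> D = K \<inter> D" if D: "clopR D" "D \<noteq> {}" and DF: "D \<inter> F = {}" for D
    proof -
      obtain Z where Z: "closedin X Z" "D = S \<inter> Z" using Dcl[OF D(1)] by blast
      have KD: "K \<inter> D = K \<inter> Z" using Z KS by blast
      have KDc: "compactin X (K \<inter> D)" using KD compact_Int_closedin[OF Kc Z(1)] by simp
      have KDne: "K \<inter> D \<noteq> {}" using a[OF D] by blast
      have okKD: "OK (K \<inter> D)" by (rule IH[OF KDc _ _ KDne]) (use DF in auto)
      have ADc: "compactin X (A \<inter> D)" if "A \<in> \<C>" for A
        using compact_Int_closedin[OF cA(1)[OF that] Z(1)] Z AS[OF that]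
        by (metis Int_absorb2 inf_assoc)
      have hyp: "A \<inter> D \<in> hyperspace_K X" if "A \<in> \<C>" for A
        using ADc[OF that] KDne Ksub that unfolding hyperspace_K_def by blast
      define img where "img = (\<lambda>A. A \<inter> D) ` \<C>"
      have h2: "connectedin (vietoris X) img"
        unfolding img_def
      proof (rule conn_image[OF conn Ch hyp])
        fix U assume U: "openin X U"
        show "openin (subtopology (vietoris X) \<C>) {A \<in> \<C>. A \<inter> D \<subseteq> U}" using upper[OF D(1) U] .
        show "openin (subtopology (vietoris X) \<C>) {A \<in> \<C>. A \<inter> D \<inter> U \<noteq> {}}" using lower[OF D(1) U] .
      qed
      have h1: "img \<subseteq> hyperspace_K X" using hyp unfolding img_def by blast
      have h3: "K \<inter> D \<in> img" using KC unfolding img_def by blast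
      have h4: "\<forall>M\<in>img. K \<inter> D \<subseteq> M" using Ksub unfolding img_def by blast
      have imp: "img \<subseteq> hyperspace_K X \<and> connectedin (vietoris X) img \<and> K \<inter> D \<in> img \<and> (\<forall>M\<in>img. K \<inter> D \<subseteq> M) \<longrightarrow> img = {K \<inter> D}"
        using okKD unfolding OK_def by (rule spec)
      have eqimg: "img = {K \<inter> D}" by (rule mp[OF imp]) (intro conjI h1 h2 h3 h4)
      show ?thesis
      proof
        fix A assume "A \<in> \<C>"
        then have "A \<inter> D \<in> img" unfolding img_def by (rule imageI)
        then show "A \<inter> D = K \<inter> D" using eqimg by simp
      qed
    qed
    have tsR: "topspace (subtopology X R) = R" using RS Stop by auto
    have "clopR R \<and> R \<noteq> {}" unfolding clopR_def using False tsR
      by (metis openin_topspace closedin_topspace)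
    then have "\<exists>D. (clopR D \<and> D \<noteq> {}) \<and> (\<forall>D'. clopR D' \<and> D' \<noteq> {} \<longrightarrow> card (D \<inter> F) \<le> card (D' \<inter> F))"
      by (rule ex_has_least_nat)
    then obtain D where D: "clopR D" "D \<noteq> {}"
      and min: "\<forall>D'. clopR D' \<and> D' \<noteq> {} \<longrightarrow> card (D \<inter> F) \<le> card (D' \<inter> F)"
      by blast
    have noF: "E \<inter> F \<noteq> {}" if E: "clopR E" "E \<noteq> {}" for E
    proof
      assume "E \<inter> F = {}"
      then have "\<forall>A\<in>\<C>. A \<inter> E = K \<inter> E" by (rule c[OF E])
      then show False by (rule b[OF E])
    qed
    have False
    proof (cases "\<exists>y. D = {y}")
      case True
      then obtain y where y: "D = {y}" by blast
      then have "y \<in> K" using a[OF D] by blast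
      then have "\<forall>A\<in>\<C>. A \<inter> D = K \<inter> D" using y Ksub by blast
      then show False by (rule b[OF D])
    next
      case nsing: False
      have Dtop: "D \<subseteq> topspace X" using DR[OF D(1)] RS Stop by blast
      have "\<not> connectedin X D"
      proof
        assume "connectedin X D"
        then have "\<exists>x. D = {x}" using hd D(2) Dtop unfolding hereditarily_disconnected_def by blast
        then show False using nsing by blast
      qed
      then have "\<not> connected_space (subtopology X D)" using Dtop by (simp add: connectedin_def)
      then obtain E where E: "openin (subtopology X D) E" "closedin (subtopology X D) E" "E \<noteq> {}" "E \<noteq> D"
        unfolding connected_space_clopen_in using Dtop by (auto simp: inf_absorb2)
      have tsD: "topspace (subtopology X D) = D" using Dtop by auto
      have E2: "openin (subtopology X D) (D - E)" "closedin (subtopology X D) (D - E)"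
        using openin_diff[OF openin_topspace E(2)] closedin_diff[OF closedin_topspace E(1)] tsD by auto
      have ED: "E \<subseteq> D" using openin_subset[OF E(1)] tsD by simp
      have subD: "subtopology (subtopology X R) D = subtopology X D"
        using DR[OF D(1)] by (simp add: subtopology_subtopology inf_absorb2)
      have lift: "clopR E'" if "openin (subtopology X D) E'" "closedin (subtopology X D) E'" for E'
        using openin_trans_full[of "subtopology X R" D E'] closedin_trans_full[of "subtopology X R" D E']
          that subD D(1) unfolding clopR_def by auto
      have c1: "clopR E" using lift E by blast
      have c2: "clopR (D - E)" using lift E2 by blast
      have ne2: "D - E \<noteq> {}" using ED E(4) by blast
      have "(D - E) \<inter> F \<noteq> {}" using noF[OF c2 ne2] .
      then have "E \<inter> F \<subset> D \<inter> F" using ED by blast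
      then have "card (E \<inter> F) < card (D \<inter> F)" using F by (meson finite_Int psubset_card_mono)
      moreover have "card (D \<inter> F) \<le> card (E \<inter> F)" using min c1 E(3) by simp
      ultimately show False by simp
    qed
    then show ?thesis ..
  qed
qed


inductive PP :: "'a set \<Rightarrow> bool" where
  PPI: "finite F \<Longrightarrow> (\<And>K'. compactin X K' \<Longrightarrow> K' \<subseteq> K \<Longrightarrow> K' \<inter> F = {} \<Longrightarrow> K' \<noteq> {} \<Longrightarrow> PP K') \<Longrightarrow> PP K"

lemma PP_OK: "PP K \<Longrightarrow> OK K"
proof (induction rule: PP.induct)
  case (PPI F K)
  show ?case
  proof (rule lemmaL[OF PPI(1)])
    fix K' assume "compactin X K'" "K' \<subseteq> K" "K' \<inter> F = {}" "K' \<noteq> {}"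
    then show "OK K'" by (rule PPI(3))
  qed
qed

lemma PP_empty: "PP {}"
  by (rule PPI[of "{}"]) auto

lemma PP_union_aux:
  assumes "PP K1"
  shows "compactin X K1 \<longrightarrow> (\<forall>K2. PP K2 \<and> compactin X K2 \<longrightarrow> PP (K1 \<union> K2))"
  using assms
proof (induction rule: PP.induct)
  case (PPI F1 K1)
  show ?case
  proof (intro impI allI, elim conjE)
    fix K2 assume K1c: "compactin X K1" and P2: "PP K2" and K2c: "compactin X K2"
    from P2 obtain F2 where F2: "finite F2"
      and H2: "\<And>K'. compactin X K' \<Longrightarrow> K' \<subseteq> K2 \<Longrightarrow> K' \<inter> F2 = {} \<Longrightarrow> K' \<noteq> {} \<Longrightarrow> PP K'"
      by (cases rule: PP.cases) blast
    show "PP (K1 \<union> K2)"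
    proof (rule PP.PPI[of "F1 \<union> F2"])
      show "finite (F1 \<union> F2)" using PPI(1) F2 by simp
    next
      fix K' assume K': "compactin X K'" "K' \<subseteq> K1 \<union> K2" "K' \<inter> (F1 \<union> F2) = {}" "K' \<noteq> {}"
      define Ka where "Ka = K' \<inter> K1"
      define Kb where "Kb = K' \<inter> K2"
      have Kac: "compactin X Ka" unfolding Ka_def by (rule compactin_Int[OF haus K'(1) K1c])
      have Kbc: "compactin X Kb" unfolding Kb_def by (rule compactin_Int[OF haus K'(1) K2c])
      have Pb: "PP Kb"
      proof (cases "Kb = {}")
        case True then show ?thesis using PP_empty by simp
      next
        case nb: False
        show ?thesis by (rule H2[OF Kbc]) (use K' nb in \<open>auto simp: Kb_def\<close>)
      qed
      have KK: "K' = Ka \<union> Kb" using K'(2) unfolding Ka_def Kb_def by blast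
      show "PP K'"
      proof (cases "Ka = {}")
        case True then show ?thesis using Pb KK by simp
      next
        case na: False
        have "compactin X Ka \<longrightarrow> (\<forall>K2. PP K2 \<and> compactin X K2 \<longrightarrow> PP (Ka \<union> K2))"
          by (rule PPI(3)[OF Kac]) (use K' na in \<open>auto simp: Ka_def\<close>)
        then have "PP (Ka \<union> Kb)" using Kac Pb Kbc by simp
        then show ?thesis using KK by simp
      qed
    qed
  qed
qed

lemma PP_union: "PP K1 \<Longrightarrow> PP K2 \<Longrightarrow> compactin X K1 \<Longrightarrow> compactin X K2 \<Longrightarrow> PP (K1 \<union> K2)"
  using PP_union_aux by blast

lemma split_compact:
  assumes K: "compactin X K" and U: "openin X U1" "openin X U2" and sub: "K \<subseteq> U1 \<union> U2"
  shows "\<exists>K1 K2. compactin X K1 \<and> compactin X K2 \<and> K1 \<subseteq> U1 \<and> K2 \<subseteq> U2 \<and> K = K1 \<union> K2"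
proof -
  have Kt: "K \<subseteq> topspace X" using K compactin_subset_topspace by blast
  have cl1: "closedin X (topspace X - U1)" "closedin X (topspace X - U2)" using U by auto
  define C1 where "C1 = K \<inter> (topspace X - U2)"
  define C2 where "C2 = K \<inter> (topspace X - U1)"
  have C1c: "compactin X C1" unfolding C1_def by (rule compact_Int_closedin[OF K cl1(2)])
  have C2c: "compactin X C2" unfolding C2_def by (rule compact_Int_closedin[OF K cl1(1)])
  have "disjnt C1 C2" using sub unfolding C1_def C2_def disjnt_def by blast
  then obtain V1 V2 where V: "openin X V1" "openin X V2" "C1 \<subseteq> V1" "C2 \<subseteq> V2" "disjnt V1 V2"
    using Hausdorff_space_compact_sets[THEN iffD1, OF haus, rule_format, OF conjI[OF C1c conjI[OF C2c]]] by blast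
  have cl2: "closedin X (topspace X - V1)" "closedin X (topspace X - V2)" using V by auto
  define K1 where "K1 = K \<inter> (topspace X - V2)"
  define K2 where "K2 = K \<inter> (topspace X - V1)"
  have r1: "compactin X K1" unfolding K1_def by (rule compact_Int_closedin[OF K cl2(2)])
  have r2: "compactin X K2" unfolding K2_def by (rule compact_Int_closedin[OF K cl2(1)])
  have r3: "K1 \<subseteq> U1" using V(4) Kt unfolding K1_def C2_def by blast
  have r4: "K2 \<subseteq> U2" using V(3) Kt unfolding K2_def C1_def by blast
  have r5: "K = K1 \<union> K2" using V(5) Kt unfolding K1_def K2_def disjnt_def by blast
  show ?thesis by (intro exI[of _ K1] exI[of _ K2] conjI r1 r2 r3 r4 r5)
qed

lemma PP_finite_cover:
  assumes "finite \<U>"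
  shows "(\<forall>U\<in>\<U>. openin X U \<and> (\<forall>K. compactin X K \<and> K \<subseteq> T \<inter> U \<longrightarrow> PP K))
         \<longrightarrow> (\<forall>K. compactin X K \<and> K \<subseteq> T \<inter> \<Union>\<U> \<longrightarrow> PP K)"
  using assms
proof (induction rule: finite_induct)
  case empty
  then show ?case using PP_empty by auto
next
  case (insert U \<U>)
  show ?case
  proof (intro impI allI, elim conjE)
    fix K assume H: "\<forall>U'\<in>insert U \<U>. openin X U' \<and> (\<forall>K. compactin X K \<and> K \<subseteq> T \<inter> U' \<longrightarrow> PP K)"
      and Kc: "compactin X K" and KT: "K \<subseteq> T \<inter> \<Union>(insert U \<U>)"
    have oU: "openin X U" using H by blast
    have oUU: "openin X (\<Union>\<U>)" using H by blast
    obtain K1 K2 where KK: "compactin X K1" "compactin X K2" "K1 \<subseteq> U" "K2 \<subseteq> \<Union>\<U>" "K = K1 \<union> K2"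
      using split_compact[OF Kc oU oUU] KT by auto
    have gU: "\<forall>K. compactin X K \<and> K \<subseteq> T \<inter> U \<longrightarrow> PP K" using H by simp
    have "PP K1" using gU KK KT by blast
    have H': "\<forall>U'\<in>\<U>. openin X U' \<and> (\<forall>K. compactin X K \<and> K \<subseteq> T \<inter> U' \<longrightarrow> PP K)" using H by simp
    have "K2 \<subseteq> T \<inter> \<Union>\<U>" using KK KT by blast
    then have "PP K2" using insert.IH H' KK(2) by simp
    moreover note \<open>PP K1\<close>
    ultimately show "PP K" using PP_union KK by simp
  qed
qed

lemma scattered_PP:
  assumes Tc: "compactin X T" and sc: "scattered_in X T"
  shows "PP T"
proof -
  define good where "good U \<longleftrightarrow> openin X U \<and> (\<forall>K. compactin X K \<and> K \<subseteq> T \<inter> U \<longrightarrow> PP K)" for U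
  define W where "W = {z\<in>T. \<exists>U. good U \<and> z \<in> U}"
  have LG: "PP K" if Kc: "compactin X K" and KW: "K \<subseteq> W" for K
  proof -
    have "K \<subseteq> \<Union>(Collect good)" using KW unfolding W_def by blast
    moreover have "\<forall>U\<in>Collect good. openin X U" unfolding good_def by blast
    ultimately obtain \<F> where F: "finite \<F>" "\<F> \<subseteq> Collect good" "K \<subseteq> \<Union>\<F>"
      using Kc unfolding compactin_def by meson
    have "\<forall>U\<in>\<F>. openin X U \<and> (\<forall>K. compactin X K \<and> K \<subseteq> T \<inter> U \<longrightarrow> PP K)"
      using F(2) unfolding good_def by blast
    moreover have "K \<subseteq> T \<inter> \<Union>\<F>" using F(3) KW unfolding W_def by blast
    ultimately have "(\<forall>U\<in>\<F>. openin X U \<and> (\<forall>K. compactin X K \<and> K \<subseteq> T \<inter> U \<longrightarrow> PP K)) \<and> K \<subseteq> T \<inter> \<Union>\<F>" by (rule conjI)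
    then have "\<forall>K. compactin X K \<and> K \<subseteq> T \<inter> \<Union>\<F> \<longrightarrow> PP K" and KT: "K \<subseteq> T \<inter> \<Union>\<F>"
      using PP_finite_cover[OF F(1), where T=T] by blast+
    then show ?thesis using Kc by blast
  qed
  have "T - W = {}"
  proof (rule ccontr)
    assume ne: "T - W \<noteq> {}"
    then obtain z where z: "z \<in> T - W" "openin (subtopology X (T - W)) {z}"
      using sc unfolding scattered_in_def by blast
    then obtain U where U: "openin X U" "{z} = U \<inter> (T - W)" by (auto simp: openin_subtopology)
    have "good U"
      unfolding good_def
    proof (intro conjI allI impI U(1), elim conjE)
      fix K assume Kc: "compactin X K" and KT: "K \<subseteq> T \<inter> U"
      show "PP K"
      proof (rule PP.PPI[of "{z}"])
        fix K' assume K': "compactin X K'" "K' \<subseteq> K" "K' \<inter> {z} = {}" "K' \<noteq> {}"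
        have "K' \<subseteq> W" using K' KT U(2) by blast
        then show "PP K'" using LG K'(1) by blast
      qed simp
    qed
    then have "z \<in> W" using z U unfolding W_def by blast
    then show False using z by blast
  qed
  then have "T \<subseteq> W" by blast
  then show ?thesis using LG Tc by blast
qed

lemma key:
  assumes conn: "connectedin (vietoris X) \<C>" and Ch: "\<C> \<subseteq> hyperspace_K X"
    and TC: "T \<in> \<C>" and sc: "scattered_in X T"
  shows "\<forall>A\<in>\<C>. A \<subseteq> T"
proof -
  have Tc: "compactin X T" using Ch TC unfolding hyperspace_K_def by blast
  have okT: "OK T" using PP_OK scattered_PP[OF Tc sc] by blast
  have tsC: "topspace (subtopology (vietoris X) \<C>) = \<C>"
    using Ch by (simp add: topspace_vietoris inf_absorb2)
  have hyp: "A \<union> T \<in> hyperspace_K X" if "A \<in> \<C>" for A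
    using that Ch Tc compactin_Un unfolding hyperspace_K_def by blast
  define img where "img = (\<lambda>A. A \<union> T) ` \<C>"
  have h2: "connectedin (vietoris X) img"
    unfolding img_def
  proof (rule conn_image[OF conn Ch hyp])
    fix U assume U: "openin X U"
    show "openin (subtopology (vietoris X) \<C>) {A \<in> \<C>. A \<union> T \<subseteq> U}"
    proof (cases "T \<subseteq> U")
      case True
      then have "{A \<in> \<C>. A \<union> T \<subseteq> U} = vietoris_upper X U \<inter> \<C>"
        using Ch unfolding vietoris_upper_def by blast
      then show ?thesis using open_upper[OF U] by (auto simp: openin_subtopology)
    next
      case False
      then have eq: "{A \<in> \<C>. A \<union> T \<subseteq> U} = {}" by blast
      show ?thesis by (simp only: eq openin_empty)
    qed
    show "openin (subtopology (vietoris X) \<C>) {A \<in> \<C>. (A \<union> T) \<inter> U \<noteq> {}}"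
    proof (cases "T \<inter> U = {}")
      case True
      then have "{A \<in> \<C>. (A \<union> T) \<inter> U \<noteq> {}} = vietoris_lower X U \<inter> \<C>"
        using Ch unfolding vietoris_lower_def by blast
      then show ?thesis using open_lower[OF U] by (auto simp: openin_subtopology)
    next
      case False
      then have "{A \<in> \<C>. (A \<union> T) \<inter> U \<noteq> {}} = \<C>" by blast
      then show ?thesis using tsC openin_topspace[of "subtopology (vietoris X) \<C>"] by simp
    qed
  qed
  have h1: "img \<subseteq> hyperspace_K X" using hyp unfolding img_def by blast
  have h3: "T \<in> img" using TC unfolding img_def by blast
  have h4: "\<forall>M\<in>img. T \<subseteq> M" unfolding img_def by blast
  have imp: "img \<subseteq> hyperspace_K X \<and> connectedin (vietoris X) img \<and> T \<in> img \<and> (\<forall>M\<in>img. T \<subseteq> M) \<longrightarrow> img = {T}"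
    using okT unfolding OK_def by (rule spec)
  have eqimg: "img = {T}" by (rule mp[OF imp]) (intro conjI h1 h2 h3 h4)
  show ?thesis
  proof
    fix A assume "A \<in> \<C>"
    then have "A \<union> T \<in> img" unfolding img_def by (rule imageI)
    then show "A \<subseteq> T" using eqimg by auto
  qed
qed

end

theorem theorem5p9:
  fixes X :: "'a topology" and \<C> :: "'a set set"
  assumes "Hausdorff_space X"
    and "hereditarily_disconnected X"
    and "\<C> \<subseteq> hyperspace_K X"
    and "connectedin (vietoris X) \<C>"
    and "\<exists>T\<in>\<C>. scattered_in X T"
  shows "card \<C> = 1"
proof -
  interpret hdX X using assms(1,2) by unfold_locales
  obtain T where T: "T \<in> \<C>" "scattered_in X T" using assms(5) by blast
  have subT: "\<forall>A\<in>\<C>. A \<subseteq> T" by (rule key[OF assms(4,3) T])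
  have "A = T" if A: "A \<in> \<C>" for A
  proof -
    have "scattered_in X A"
      using T(2) subT A unfolding scattered_in_def by (meson order_trans)
    then have "\<forall>B\<in>\<C>. B \<subseteq> A" by (rule key[OF assms(4,3) A])
    then show ?thesis using subT A T(1) by blast
  qed
  then have "\<C> = {T}" using T(1) by blast
  then show ?thesis by simp
qed

end
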